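(* For every integer $t\ge 2$, the dynamic geometric grid $G^{(t)}$ satisfies: (i) (geometric spacing) for every integer $d$ with $1\le d\le t/2$ there exists $g\in G^{(t)}$ with $d/2\le g\le d$; (ii) (logarithmic cardinality) $|G^{(t)}|<3\log t$; (iii) (recycling) $\{g-1: g\in G^{(t+1)}\setminus\{1\}\}\subseteq G^{(t)}$, equivalently $(t+1)-G^{(t+1)}\subseteq (t-G^{(t)})\cup\{t\}$.
   Context: $\log$ denotes the natural logarithm. For integers $a$ and $b\ge 1$, $a \bmod b = a-b\lfloor a/b\rfloor$. For a set $\mathcal X$ of reals and a real $x$, $x-\mathcal X=\{x-s:s\in\mathcal X\}$. For an integer $t\ge 2$ the dynamic geometric grid is $$G^{(t)}=\{1\}\cup\bigcup_{j=1}^{\lfloor \log_2\{(t-1)/3\}\rfloor+1}\{g^{(t)}_{L,j}\}\cup\bigcup_{j=1}^{\lfloor\log_2(t-1)\rfloor-1}\{g^{(t)}_{R,j}\},$$ where $g^{(t)}_{L,j}=2^j+\{(t-1)\bmod 2^{j-1}\}$ and $g^{(t)}_{R,j}=g^{(t)}_{L,j}+2^{j-1}$; a union whose upper index is smaller than $1$ is empty. *)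

theory Defs
  imports "HOL-Analysis.Analysis"
begin

definition gL :: "nat \<Rightarrow> nat \<Rightarrow> nat" where
  "gL t j = 2 ^ j + ((t - 1) mod 2 ^ (j - 1))"

definition gR :: "nat \<Rightarrow> nat \<Rightarrow> nat" where
  "gR t j = gL t j + 2 ^ (j - 1)"

definition dyn_grid :: "nat \<Rightarrow> nat set" where
  "dyn_grid t = {1}
     \<union> (\<Union>j\<in>{j::int. 1 \<le> j \<and> j \<le> \<lfloor>log 2 ((real t - 1) / 3)\<rfloor> + 1}. {gL t (nat j)})
     \<union> (\<Union>j\<in>{j::int. 1 \<le> j \<and> j \<le> \<lfloor>log 2 (real t - 1)\<rfloor> - 1}. {gR t (nat j)})"

end

theory Submission
  imports Defs
begin


lemma idxL:
  assumes "t \<ge> 2" "(1::int) \<le> j"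
  shows "(j \<le> \<lfloor>log 2 ((real t - 1)/3)\<rfloor> + 1) \<longleftrightarrow> 3 * 2^(nat j - 1) \<le> t - 1"
proof -
  have pos: "(real t - 1)/3 > 0" using assms by simp
  have e: "(2::real) powr real_of_int (j - 1) = 2 ^ (nat j - 1)"
    using assms powr_realpow[of 2 "nat j - 1"] by (simp add: of_nat_diff)
  have "(j \<le> \<lfloor>log 2 ((real t - 1)/3)\<rfloor> + 1) \<longleftrightarrow> real_of_int (j-1) \<le> log 2 ((real t - 1)/3)"
    using le_floor_iff[of "j-1" "log 2 ((real t - 1)/3)"] by linarith
  also have "\<dots> \<longleftrightarrow> 2 powr real_of_int (j-1) \<le> (real t - 1)/3"
    by (rule le_log_iff) (use pos in auto)
  also have "\<dots> \<longleftrightarrow> 3 * (2::real) ^ (nat j - 1) \<le> real t - 1" unfolding e by auto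
  also have "\<dots> \<longleftrightarrow> real (3 * 2^(nat j - 1)) \<le> real (t - 1)" using assms by (simp add: of_nat_diff)
  also have "\<dots> \<longleftrightarrow> 3 * 2^(nat j - 1) \<le> t - 1" by (rule of_nat_le_iff)
  finally show ?thesis .
qed

lemma idxR:
  assumes "t \<ge> 2" "(1::int) \<le> j"
  shows "(j \<le> \<lfloor>log 2 (real t - 1)\<rfloor> - 1) \<longleftrightarrow> 2^(nat j + 1) \<le> t - 1"
proof -
  have pos: "(real t - 1) > 0" using assms by simp
  have e: "(2::real) powr real_of_int (j + 1) = 2 ^ (nat j + 1)"
    using assms powr_realpow[of 2 "nat j + 1"] by (simp add: add.commute)
  have "(j \<le> \<lfloor>log 2 (real t - 1)\<rfloor> - 1) \<longleftrightarrow> real_of_int (j+1) \<le> log 2 (real t - 1)"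
    using le_floor_iff[of "j+1" "log 2 (real t - 1)"] by linarith
  also have "\<dots> \<longleftrightarrow> 2 powr real_of_int (j+1) \<le> (real t - 1)"
    by (rule le_log_iff) (use pos in auto)
  also have "\<dots> \<longleftrightarrow> (2::real) ^ (nat j + 1) \<le> real t - 1" unfolding e by auto
  also have "\<dots> \<longleftrightarrow> real (2^(nat j + 1)) \<le> real (t - 1)" using assms by (simp add: of_nat_diff)
  also have "\<dots> \<longleftrightarrow> 2^(nat j + 1) \<le> t - 1" by (rule of_nat_le_iff)
  finally show ?thesis .
qed

lemma int_set_image:
  "{j::int. 1 \<le> j \<and> P j} = int ` {j. 1 \<le> j \<and> P (int j)}"
proof (auto simp: image_iff)
  fix j :: int assume "1 \<le> j" "P j"
  then show "\<exists>x\<ge>Suc 0. P (int x) \<and> j = int x" by (intro exI[of _ "nat j"]) auto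
qed

lemma grid_alt:
  assumes "t \<ge> 2"
  shows "dyn_grid t = {1} \<union> gL t ` {j. 1 \<le> j \<and> 3 * 2^(j-1) \<le> t - 1}
                        \<union> gR t ` {j. 1 \<le> j \<and> 2^(j+1) \<le> t - 1}"
proof -
  have A: "{j::int. 1 \<le> j \<and> j \<le> \<lfloor>log 2 ((real t - 1) / 3)\<rfloor> + 1}
        = int ` {j. 1 \<le> j \<and> 3 * 2^(j-1) \<le> t - 1}"
    apply (subst int_set_image) using idxL[OF assms] by (auto simp: image_iff)
  have B: "{j::int. 1 \<le> j \<and> j \<le> \<lfloor>log 2 (real t - 1)\<rfloor> - 1}
        = int ` {j. 1 \<le> j \<and> 2^(j+1) \<le> t - 1}"
    apply (subst int_set_image) using idxR[OF assms] by (auto simp: image_iff)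
  show ?thesis unfolding dyn_grid_def A B by auto
qed



lemma mod_pred:
  assumes "(t::nat) \<ge> 1" "m > 0"
  shows "t mod m \<noteq> 0 \<Longrightarrow> (t-1) mod m = t mod m - 1"
    and "t mod m = 0 \<Longrightarrow> (t-1) mod m = m - 1"
proof -
  obtain s where s: "t = Suc s" using assms by (cases t) auto
  have "s mod m < m" using assms by simp
  then show "t mod m \<noteq> 0 \<Longrightarrow> (t-1) mod m = t mod m - 1"
    and "t mod m = 0 \<Longrightarrow> (t-1) mod m = m - 1"
    unfolding s by (auto simp: mod_Suc split: if_splits)
qed

lemma gL_Suc: "gL t (Suc k) = 2 * 2^k + (t - 1) mod 2^k" by (simp add: gL_def)
lemma gR_Suc: "gR t (Suc k) = 2 * 2^k + (t - 1) mod 2^k + 2^k" by (simp add: gR_def gL_def)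

lemma memL: "t \<ge> 2 \<Longrightarrow> 3 * 2^k \<le> t - 1 \<Longrightarrow> gL t (Suc k) \<in> dyn_grid t"
  by (subst grid_alt) auto
lemma memR: "t \<ge> 2 \<Longrightarrow> 2^(k+2) \<le> t - 1 \<Longrightarrow> gR t (Suc k) \<in> dyn_grid t"
  by (subst grid_alt) auto

lemma recycle:
  assumes t: "t \<ge> 2" and g: "g \<in> dyn_grid (t+1)" "g \<noteq> 1"
  shows "g - 1 \<in> dyn_grid t"
proof -
  have t1: "t + 1 \<ge> 2" using t by simp
  have one: "1 \<in> dyn_grid t" using grid_alt[OF t] by auto
  have gg: "g \<in> gL (t+1) ` {j. 1 \<le> j \<and> 3 * 2^(j-1) \<le> t} \<union> gR (t+1) ` {j. 1 \<le> j \<and> 2^(j+1) \<le> t}"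
    using g grid_alt[OF t1] by simp
  consider
     (L) k where "g = gL (t+1) (Suc k)" "3 * 2^k \<le> t"
   | (R) k where "g = gR (t+1) (Suc k)" "2^(k+2) \<le> t"
  proof -
    from gg show thesis
    proof
      assume "g \<in> gL (t+1) ` {j. 1 \<le> j \<and> 3 * 2^(j-1) \<le> t}"
      then obtain j where j: "g = gL (t+1) j" "1 \<le> j" "3 * 2^(j-1) \<le> t" by blast
      then obtain k where "j = Suc k" by (cases j) auto
      then show thesis using that(1)[of k] j by simp
    next
      assume "g \<in> gR (t+1) ` {j. 1 \<le> j \<and> 2^(j+1) \<le> t}"
      then obtain j where j: "g = gR (t+1) j" "1 \<le> j" "2^(j+1) \<le> t" by blast
      then obtain k where "j = Suc k" by (cases j) auto
      then show thesis using that(2)[of k] j by simp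
    qed
  qed
  then show ?thesis
  proof cases
    case L
    have gk: "g = 2 * 2^k + t mod 2^k" using L by (simp add: gL_Suc)
    show ?thesis
    proof (cases "t mod 2^k = 0")
      case False
      have "(t-1) mod 2^k = t mod 2^k - 1" using mod_pred(1)[OF _ _ False] t by simp
      moreover have "3 * 2^k \<noteq> t" using False by auto
      ultimately show ?thesis using memL[OF t, of k] L(2) gk False by (simp add: gL_Suc)
    next
      case True
      show ?thesis
      proof (cases k)
        case 0 then show ?thesis using gk one by simp
      next
        case (Suc m)
        have "2^k dvd t" using True by auto
        moreover have "(2::nat)^m dvd 2^k" using Suc by (intro le_imp_power_dvd) simp
        ultimately have d: "2^m dvd t" by (rule dvd_trans[rotated])
        then have "t mod 2^m = 0" by simp
        then have "(t-1) mod 2^m = 2^m - 1" using mod_pred(2) t by simp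
        moreover have "2^(m+2) \<le> t - 1" using L(2) Suc by simp
        ultimately show ?thesis using memR[OF t, of m] gk True Suc by (simp add: gR_Suc)
      qed
    qed
  next
    case R
    have gk: "g = 2 * 2^k + t mod 2^k + 2^k" using R by (simp add: gR_Suc)
    show ?thesis
    proof (cases "t mod 2^k = 0")
      case False
      have "(t-1) mod 2^k = t mod 2^k - 1" using mod_pred(1)[OF _ _ False] t by simp
      moreover have "2^(k+2) \<noteq> t" using False by (auto simp: power_add)
      ultimately show ?thesis using memR[OF t, of k] R(2) gk False by (simp add: gR_Suc)
    next
      case True
      have "(t-1) mod 2^k = 2^k - 1" using mod_pred(2)[OF _ _ True] t by simp
      moreover have "3 * 2^k \<le> t - 1" using R(2) by simp
      ultimately show ?thesis using memL[OF t, of k] gk True by (simp add: gL_Suc)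
    qed
  qed
qed



lemma spacing:
  assumes t: "t \<ge> 2" and d: "1 \<le> d" "2 * d \<le> t"
  shows "\<exists>g\<in>dyn_grid t. d \<le> 2 * g \<and> g \<le> d"
proof (cases "d = 1")
  case True then show ?thesis using grid_alt[OF t] by auto
next
  case False
  obtain n where n: "2^n \<le> d" "d < 2^(n+1)" using ex_power_ivl1[of 2 d] d by auto
  have "n \<noteq> 0"
  proof
    assume "n = 0" with n False d show False by simp
  qed
  then obtain k where k: "n = Suc k" by (cases n) auto
  define p where "p = (2::nat)^k"
  have p: "2 * p \<le> d" "d < 4 * p" "p \<ge> 1" using n k by (auto simp: p_def)
  define r where "r = (t - 1) mod p"
  have r: "r < p" using p by (simp add: r_def)
  show ?thesis
  proof (cases "2 * p + r \<le> d")
    case True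
    have "3 * 2^k \<le> t - 1" using p d unfolding p_def by linarith
    then have "gL t (Suc k) \<in> dyn_grid t" by (rule memL[OF t])
    moreover have "gL t (Suc k) = 2 * p + r" by (simp add: gL_Suc p_def r_def)
    ultimately show ?thesis using True p by (intro bexI[of _ "gL t (Suc k)"]) auto
  next
    case False
    have "k \<noteq> 0"
    proof
      assume "k = 0" with False p r show False unfolding p_def by simp
    qed
    then obtain m where m: "k = Suc m" by (cases k) auto
    define q where "q = (2::nat)^m"
    have pq: "p = 2 * q" by (simp add: p_def q_def m)
    define r' where "r' = (t - 1) mod q"
    have r': "r' < q" using pq p by (simp add: r'_def)
    have "2^(m+2) \<le> t - 1" using p d pq unfolding q_def by simp
    then have "gR t (Suc m) \<in> dyn_grid t" by (rule memR[OF t])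
    moreover have "gR t (Suc m) = 2 * q + r' + q" by (simp add: gR_Suc q_def r'_def)
    ultimately show ?thesis using False p r r' pq by (intro bexI[of _ "gR t (Suc m)"]) auto
  qed
qed

lemma grid_ge1: "t \<ge> 2 \<Longrightarrow> g \<in> dyn_grid t \<Longrightarrow> g \<ge> 1"
  by (subst (asm) grid_alt) (auto simp: gL_def gR_def Suc_le_eq)

lemma ln2_ge: "3 * ln 2 > (2::real)"
proof -
  have "exp (2::real) = exp 1 * exp 1" by (simp flip: exp_add)
  also have "\<dots> < (272/100) * (272/100)"
    using e_less_272 by (intro mult_strict_mono) auto
  also have "\<dots> < exp (3 * ln 2)"
  proof -
    have "ln ((2::real)^3) = real 3 * ln 2" using ln_realpow[of "2::real" 3] by simp
    then have "3 * ln 2 = ln (8::real)" by simp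
    then show ?thesis by simp
  qed
  finally show ?thesis by simp
qed

lemma UN_sing: "(\<Union>j\<in>S. {f j}) = f ` S" by auto

lemma card_idx: "card {j::int. 1 \<le> j \<and> j \<le> K} = nat K"
proof -
  have "{j::int. 1 \<le> j \<and> j \<le> K} = {1..K}" by auto
  then show ?thesis by simp
qed

lemma finite_idx: "finite {j::int. 1 \<le> j \<and> j \<le> K}"
proof -
  have "{j::int. 1 \<le> j \<and> j \<le> K} = {1..K}" by auto
  then show ?thesis by simp
qed

lemma card_bound:
  assumes t: "t \<ge> 2"
  shows "real (card (dyn_grid t)) < 3 * ln (real t)"
proof (cases "t \<ge> 4")
  case False
  have e1: "{j. 1 \<le> j \<and> 3 * 2^(j-1) \<le> t - 1} = {}"
  proof -
    { fix j :: nat assume "3 * 2^(j-1) \<le> t - 1"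
      moreover have "(2::nat)^(j-1) \<ge> 1" by simp
      ultimately have False using False by linarith }
    then show ?thesis by blast
  qed
  have e2: "{j. 1 \<le> j \<and> 2^(j+1) \<le> t - 1} = {}"
  proof -
    { fix j :: nat assume "1 \<le> j" "2^(j+1) \<le> t - 1"
      moreover have "(2::nat)^(j+1) \<ge> 2^2" by (intro power_increasing) (use \<open>1 \<le> j\<close> in auto)
      ultimately have False using False by simp }
    then show ?thesis by blast
  qed
  have "dyn_grid t = {1}" unfolding grid_alt[OF t] e1 e2 by simp
  moreover have "3 * ln (real t) \<ge> 3 * ln 2" using t by simp
  ultimately show ?thesis using ln2_ge by simp
next
  case True
  define n where "n = real t - 1"
  have n3: "n \<ge> 3" using True by (simp add: n_def)
  define KL where "KL = \<lfloor>log 2 (n / 3)\<rfloor> + 1"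
  define KR where "KR = \<lfloor>log 2 n\<rfloor> - 1"
  have "card (dyn_grid t) \<le> card ({1::nat} \<union> gL t ` (\<lambda>j. nat j) ` {j::int. 1 \<le> j \<and> j \<le> KL})
             + card (gR t ` (\<lambda>j. nat j) ` {j::int. 1 \<le> j \<and> j \<le> KR})"
    unfolding dyn_grid_def UN_sing KL_def KR_def n_def image_image by (rule card_Un_le)
  also have "\<dots> \<le> 1 + nat KL + nat KR"
  proof -
    have "card ({1::nat} \<union> gL t ` (\<lambda>j. nat j) ` {j::int. 1 \<le> j \<and> j \<le> KL}) \<le> 1 + card (gL t ` (\<lambda>j. nat j) ` {j::int. 1 \<le> j \<and> j \<le> KL})"
      using card_Un_le[of "{1::nat}"] by simp
    also have "card (gL t ` (\<lambda>j. nat j) ` {j::int. 1 \<le> j \<and> j \<le> KL}) \<le> nat KL"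
      by (metis card_idx card_image_le finite_idx finite_imageI order_trans)
    moreover have "card (gR t ` (\<lambda>j. nat j) ` {j::int. 1 \<le> j \<and> j \<le> KR}) \<le> nat KR"
      by (metis card_idx card_image_le finite_idx finite_imageI order_trans)
    ultimately show ?thesis by linarith
  qed
  finally have c: "real (card (dyn_grid t)) \<le> 1 + real (nat KL) + real (nat KR)" by linarith
  have l3: "log 2 3 > (1::real)" by simp
  have lnn: "log 2 n \<ge> log 2 3" using n3 by simp
  have ld: "log 2 (n/3) = log 2 n - log 2 3" using n3 by (simp add: log_divide)
  have "real (nat KL) \<le> log 2 n - log 2 3 + 1"
  proof -
    have "real_of_int KL \<le> log 2 (n/3) + 1" unfolding KL_def using of_int_floor_le[of "log 2 (n/3)"] by simp
    then show ?thesis using ld lnn by (cases "0 \<le> KL") auto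
  qed
  moreover have "real (nat KR) \<le> log 2 n - 1"
  proof -
    have "real_of_int KR \<le> log 2 n - 1" unfolding KR_def using of_int_floor_le[of "log 2 n"] by simp
    moreover have "real (nat KR) = (if 0 \<le> KR then real_of_int KR else 0)" by simp
    moreover have "log 2 n \<ge> 1" using l3 lnn by linarith
    ultimately show ?thesis by (simp split: if_splits)
  qed
  ultimately have c2: "real (card (dyn_grid t)) < 2 * log 2 n" using c l3 by linarith
  have lnpos: "ln n \<ge> 0" using n3 by simp
  have "2 * log 2 n = 2 * ln n / ln 2" by (simp add: log_def)
  also have "\<dots> \<le> 3 * ln n"
  proof -
    have "2 * ln n \<le> 3 * ln 2 * ln n" using ln2_ge lnpos by (intro mult_right_mono) auto
    then show ?thesis by (simp add: divide_le_eq mult.commute mult.left_commute)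
  qed
  also have "\<dots> \<le> 3 * ln (real t)" using n3 by (simp add: n_def)
  finally show ?thesis using c2 by linarith
qed


theorem lemma1:
  fixes t :: nat
  assumes "t \<ge> 2"
  shows "(\<forall>d::nat. 1 \<le> d \<and> real d \<le> real t / 2 \<longrightarrow>
            (\<exists>g\<in>dyn_grid t. real d / 2 \<le> real g \<and> g \<le> d))
       \<and> real (card (dyn_grid t)) < 3 * ln (real t)
       \<and> (\<lambda>g. g - 1) ` (dyn_grid (t + 1) - {1}) \<subseteq> dyn_grid t
       \<and> (\<lambda>g. int (t + 1) - int g) ` dyn_grid (t + 1)
            \<subseteq> ((\<lambda>g. int t - int g) ` dyn_grid t) \<union> {int t}"
proof (intro conjI)
  show "\<forall>d::nat. 1 \<le> d \<and> real d \<le> real t / 2 \<longrightarrow>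
            (\<exists>g\<in>dyn_grid t. real d / 2 \<le> real g \<and> g \<le> d)"
  proof (intro allI impI)
    fix d :: nat assume h: "1 \<le> d \<and> real d \<le> real t / 2"
    then have "2 * d \<le> t" by linarith
    then obtain g where g: "g \<in> dyn_grid t" "d \<le> 2 * g" "g \<le> d" using spacing[OF assms] h by blast
    have "real d \<le> real (2*g)" using g(2) by (simp only: of_nat_le_iff)
    then have "real d / 2 \<le> real g" by simp
    then show "\<exists>g\<in>dyn_grid t. real d / 2 \<le> real g \<and> g \<le> d"
      using g by blast
  qed
  show "real (card (dyn_grid t)) < 3 * ln (real t)" by (rule card_bound[OF assms])
  show "(\<lambda>g. g - 1) ` (dyn_grid (t + 1) - {1}) \<subseteq> dyn_grid t"
    using recycle[OF assms] by blast
  show "(\<lambda>g. int (t + 1) - int g) ` dyn_grid (t + 1)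
            \<subseteq> ((\<lambda>g. int t - int g) ` dyn_grid t) \<union> {int t}"
  proof
    fix x assume "x \<in> (\<lambda>g. int (t + 1) - int g) ` dyn_grid (t + 1)"
    then obtain g where g: "g \<in> dyn_grid (t+1)" "x = int (t + 1) - int g" by blast
    show "x \<in> ((\<lambda>g. int t - int g) ` dyn_grid t) \<union> {int t}"
    proof (cases "g = 1")
      case True then show ?thesis using g by simp
    next
      case False
      have "g \<ge> 1" using grid_ge1[OF _ g(1)] assms by simp
      moreover have "g - 1 \<in> dyn_grid t" using recycle[OF assms g(1) False] .
      ultimately show ?thesis using g by (intro UnI1 image_eqI[of _ _ "g - 1"]) auto
    qed
  qed
qed

end
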